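(* Let $q\geq 2$, let $A\in\mathbb{R}_{\geq0}^{q\times q}$, let $V$ be the value of the one-shot two-person zero-sum game defined by $A$, and let $0<\varepsilon\leq V$ be a constant. Let $\mathrm{ALG}$ be an algorithm (possibly randomized, with advice) for the repeated matrix game with cost matrix $A$. If $\mathbb{E}[\mathrm{ALG}(\sigma)]\leq (V-\varepsilon)n$ for every input $\sigma$ of length $n$, then $\mathrm{ALG}$ must read at least $$b\geq \frac{\varepsilon^2}{2\ln(2)\cdot\|A\|_\infty^2}\,n=\Omega(n)$$ bits of advice.
   Context: The one-shot game defined by $A$: a row player chooses $x\in[q]=\{1,\dots,q\}$, a column player chooses $y\in[q]$ simultaneously, and the column player pays $A(x,y)$ to the row player; its value $V$ is $\max_\mu\min_\nu\mathbb{E}_{x\sim\mu,y\sim\nu}A(x,y)$ over mixed strategies. $\|A\|_\infty=\max_{x,y}A(x,y)$. The repeated matrix game (RMG) with cost matrix $A$ is the online problem with inputs $\sigma=(n,x_1,\dots,x_n)$, $x_i\in[q]$; in round $i$ ($1\le i\le n$) the algorithm learns $n$ (if $i=1$) or $x_{i-1}$ (if $i>1$), then answers $y_i\in[q]$ as a function of $n,x_1,\dots,x_{i-1}$ (and its advice/randomness); the cost is $\sum_{i=1}^nA(x_i,y_i)$. Here $n$ (the number of characters) is called the length of the input. Algorithms with advice read bits from an infinite advice tape prepared by an oracle knowing the whole input; a randomized algorithm with advice is a probability distribution over deterministic algorithms with advice. *)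

theory Defs
  imports "HOL-Probability.Probability"
begin

definition mixed_strategies :: "nat \<Rightarrow> (nat \<Rightarrow> real) set" where
  "mixed_strategies q = {p. (\<forall>i\<in>{1..q}. 0 \<le> p i) \<and> (\<Sum>i=1..q. p i) = 1}"

definition game_value :: "nat \<Rightarrow> (nat \<Rightarrow> nat \<Rightarrow> real) \<Rightarrow> real" where
  "game_value q A = (SUP \<mu>\<in>mixed_strategies q. INF \<nu>\<in>mixed_strategies q.
      (\<Sum>x=1..q. \<Sum>y=1..q. \<mu> x * \<nu> y * A x y))"

definition max_entry :: "nat \<Rightarrow> (nat \<Rightarrow> nat \<Rightarrow> real) \<Rightarrow> real" where
  "max_entry q A = Max {A x y | x y. x \<in> {1..q} \<and> y \<in> {1..q}}"

text \<open>A deterministic online algorithm with advice for the RMG.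
  answer n xs w : answer in round (length xs + 1), given n, previous requests xs, advice tape w.
  reads n xs w  : number of advice bits read (from the start of the tape) up to and including
                  that round.
  advice n xs   : advice tape prepared by the advice-giver  for the input (n, xs).\<close>
record det_adv_alg =
  answer :: "nat \<Rightarrow> nat list \<Rightarrow> (nat \<Rightarrow> bool) \<Rightarrow> nat"
  reads  :: "nat \<Rightarrow> nat list \<Rightarrow> (nat \<Rightarrow> bool) \<Rightarrow> nat"
  advice :: "nat \<Rightarrow> nat list \<Rightarrow> (nat \<Rightarrow> bool)"

definition wf_alg :: "nat \<Rightarrow> det_adv_alg \<Rightarrow> bool" where
  "wf_alg q D \<longleftrightarrow>
     (\<forall>n xs w. set xs \<subseteq> {1..q} \<longrightarrow> answer D n xs w \<in> {1..q}) \<and>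
     (\<forall>n xs w w'. (\<forall>i < reads D n xs w. w' i = w i) \<longrightarrow>
        answer D n xs w' = answer D n xs w \<and> reads D n xs w' = reads D n xs w)"

definition valid_input :: "nat \<Rightarrow> nat \<Rightarrow> nat list \<Rightarrow> bool" where
  "valid_input q n xs \<longleftrightarrow> length xs = n \<and> set xs \<subseteq> {1..q}"

definition alg_cost :: "(nat \<Rightarrow> nat \<Rightarrow> real) \<Rightarrow> det_adv_alg \<Rightarrow> nat \<Rightarrow> nat list \<Rightarrow> real" where
  "alg_cost A D n xs = (\<Sum>i<n. A (xs ! i) (answer D n (take i xs) (advice D n xs)))"

definition bits_read :: "det_adv_alg \<Rightarrow> nat \<Rightarrow> nat list \<Rightarrow> nat" where
  "bits_read D n xs = Max (insert 0 {reads D n (take i xs) (advice D n xs) | i. i < n})"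

end

theory Submission
  imports Defs
begin


lemma exp_neg_le: fixes t :: real assumes "0 \<le> t" shows "exp (-t) \<le> 1 - t + t^2/2"
proof -
  obtain s where "exp (-t) = (\<Sum>m<3. ((-t) ^ m) / fact m) + (exp s / fact 3) * (-t) ^ 3"
    using Maclaurin_exp_le[of "-t" 3] by blast
  moreover have "(\<Sum>m<3. ((-t) ^ m) / fact m) = 1 - t + t^2/2"
    by (simp add: numeral_3_eq_3 fact_numeral power2_eq_square)
  moreover have "(exp s / fact 3) * (-t) ^ 3 \<le> 0"
    using assms by (simp add: mult_nonneg_nonpos)
  ultimately show ?thesis by linarith
qed

fun es :: "nat \<Rightarrow> (nat \<Rightarrow> real) \<Rightarrow> nat \<Rightarrow> (nat list \<Rightarrow> real) \<Rightarrow> real" where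
  "es q \<mu> 0 f = f []"
| "es q \<mu> (Suc k) f = (\<Sum>x=1..q. \<mu> x * es q \<mu> k (\<lambda>xs. f (x # xs)))"

lemma es_mono:
  assumes "\<mu> \<in> mixed_strategies q"
    and "\<forall>xs. length xs = k \<and> set xs \<subseteq> {1..q} \<longrightarrow> f xs \<le> g xs"
  shows "es q \<mu> k f \<le> es q \<mu> k g"
  using assms(2)
proof (induction k arbitrary: f g)
  case 0 then show ?case by simp
next
  case (Suc k)
  have "\<mu> x * es q \<mu> k (\<lambda>xs. f (x # xs)) \<le> \<mu> x * es q \<mu> k (\<lambda>xs. g (x # xs))" if "x \<in> {1..q}" for x
  proof (rule mult_left_mono)
    show "es q \<mu> k (\<lambda>xs. f (x # xs)) \<le> es q \<mu> k (\<lambda>xs. g (x # xs))"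
      using Suc.IH[of "\<lambda>xs. f (x # xs)" "\<lambda>xs. g (x # xs)"] Suc.prems that by auto
    show "0 \<le> \<mu> x" using assms(1) that by (auto simp: mixed_strategies_def)
  qed
  then have "(\<Sum>x=1..q. \<mu> x * es q \<mu> k (\<lambda>xs. f (x # xs))) \<le> (\<Sum>x=1..q. \<mu> x * es q \<mu> k (\<lambda>xs. g (x # xs)))"
    by (intro sum_mono) blast
  then show ?case by simp
qed

lemma es_affine:
  assumes "\<mu> \<in> mixed_strategies q"
  shows "es q \<mu> k (\<lambda>xs. a + c * f xs) = a + c * es q \<mu> k f"
proof (induction k arbitrary: f)
  case 0 then show ?case by simp
next
  case (Suc k)
  have s1: "(\<Sum>x=1..q. \<mu> x) = 1" using assms by (simp add: mixed_strategies_def)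
  have "es q \<mu> (Suc k) (\<lambda>xs. a + c * f xs) = (\<Sum>x=1..q. \<mu> x * (a + c * es q \<mu> k (\<lambda>xs. f (x # xs))))"
    using Suc.IH by simp
  also have "\<dots> = a * (\<Sum>x=1..q. \<mu> x) + c * (\<Sum>x=1..q. \<mu> x * es q \<mu> k (\<lambda>xs. f (x # xs)))"
    by (simp add: algebra_simps sum.distrib sum_distrib_left)
  finally show ?case using s1 by simp
qed

lemma es_sum:
  assumes "finite T"
  shows "es q \<mu> k (\<lambda>xs. \<Sum>t\<in>T. f t xs) = (\<Sum>t\<in>T. es q \<mu> k (f t))"
proof (induction k arbitrary: f)
  case 0 then show ?case by simp
next
  case (Suc k)
  have "es q \<mu> (Suc k) (\<lambda>xs. \<Sum>t\<in>T. f t xs) = (\<Sum>x=1..q. \<mu> x * (\<Sum>t\<in>T. es q \<mu> k (\<lambda>xs. f t (x # xs))))"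
    using Suc.IH[of "\<lambda>t xs. f t (_ # xs)"] by simp
  also have "\<dots> = (\<Sum>t\<in>T. \<Sum>x=1..q. \<mu> x * es q \<mu> k (\<lambda>xs. f t (x # xs)))"
    by (simp add: sum_distrib_left sum.swap[of _ T])
  finally show ?case by simp
qed



lemma round_bound:
  fixes A :: "nat \<Rightarrow> nat \<Rightarrow> real"
  assumes mu: "\<mu> \<in> mixed_strategies q"
    and nn: "\<forall>x\<in>{1..q}. \<forall>y\<in>{1..q}. 0 \<le> A x y"
    and ub: "\<forall>x\<in>{1..q}. \<forall>y\<in>{1..q}. A x y \<le> Am"
    and mm: "m \<le> (\<Sum>x=1..q. \<mu> x * A x y)"
    and y: "y \<in> {1..q}" and l: "0 \<le> l"
  shows "(\<Sum>x=1..q. \<mu> x * exp (-l * A x y)) \<le> exp (-l*m + l^2*Am^2/2)"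
proof -
  have mu0: "\<forall>x\<in>{1..q}. 0 \<le> \<mu> x" and s1: "(\<Sum>x=1..q. \<mu> x) = 1"
    using mu by (auto simp: mixed_strategies_def)
  have t: "\<mu> x * exp (-l * A x y) \<le> \<mu> x - l * (\<mu> x * A x y) + \<mu> x * (l^2*Am^2/2)"
    if x: "x \<in> {1..q}" for x
  proof -
    have a0: "0 \<le> A x y" and a1: "A x y \<le> Am" using nn ub x y by auto
    have "exp (-l * A x y) = exp (- (l * A x y))" by simp
    also have "\<dots> \<le> 1 - l * A x y + (l * A x y)^2/2"
      by (rule exp_neg_le) (use a0 l in simp)
    also have "\<dots> \<le> 1 - l * A x y + l^2*Am^2/2"
    proof -
      have "(l * A x y)^2 \<le> (l*Am)^2"
        using a0 a1 l by (intro power_mono mult_left_mono) auto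
      then show ?thesis by (simp add: power_mult_distrib)
    qed
    finally have "\<mu> x * exp (-l * A x y) \<le> \<mu> x * (1 - l * A x y + l^2*Am^2/2)"
      using mu0 x by (intro mult_left_mono) auto
    then show ?thesis by (simp add: algebra_simps)
  qed
  have "(\<Sum>x=1..q. \<mu> x * exp (-l * A x y)) \<le> (\<Sum>x=1..q. \<mu> x - l * (\<mu> x * A x y) + \<mu> x * (l^2*Am^2/2))"
    by (intro sum_mono t) 
  also have "\<dots> = (\<Sum>x=1..q. \<mu> x) - l * (\<Sum>x=1..q. \<mu> x * A x y) + (\<Sum>x=1..q. \<mu> x) * (l^2*Am^2/2)"
    by (simp only: sum.distrib sum_subtractf sum_distrib_left[symmetric] sum_distrib_right[symmetric])
  also have "\<dots> = 1 - l * (\<Sum>x=1..q. \<mu> x * A x y) + l^2*Am^2/2"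
    by (simp only: s1)
  also have "\<dots> \<le> 1 + (-l*m + l^2*Am^2/2)"
    using mm l mult_left_mono[OF mm l] by linarith
  also have "\<dots> \<le> exp (-l*m + l^2*Am^2/2)" by (rule exp_ge_add_one_self)
  finally show ?thesis .
qed

lemma es_hoeff:
  fixes A :: "nat \<Rightarrow> nat \<Rightarrow> real"
  assumes mu: "\<mu> \<in> mixed_strategies q"
    and nn: "\<forall>x\<in>{1..q}. \<forall>y\<in>{1..q}. 0 \<le> A x y"
    and ub: "\<forall>x\<in>{1..q}. \<forall>y\<in>{1..q}. A x y \<le> Am"
    and mm: "\<forall>y\<in>{1..q}. m \<le> (\<Sum>x=1..q. \<mu> x * A x y)"
    and l: "0 \<le> l"
  shows "\<forall>ans. (\<forall>ys. set ys \<subseteq> {1..q} \<longrightarrow> ans ys \<in> {1..q}) \<longrightarrow>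
     es q \<mu> k (\<lambda>xs. exp (-l * (\<Sum>i<k. A (xs!i) (ans (take i xs))))) \<le> exp (-l*m + l^2*Am^2/2) ^ k"
proof (induction k)
  case 0 then show ?case by simp
next
  case (Suc k)
  let ?E = "exp (-l*m + l^2*Am^2/2)"
  show ?case
  proof (intro allI impI)
    fix ans :: "nat list \<Rightarrow> nat"
    assume ans: "\<forall>ys. set ys \<subseteq> {1..q} \<longrightarrow> ans ys \<in> {1..q}"
    have y0: "ans [] \<in> {1..q}" using ans by auto
    have mu0: "\<forall>x\<in>{1..q}. 0 \<le> \<mu> x" using mu by (auto simp: mixed_strategies_def)
    have split: "exp (-l * (\<Sum>i<Suc k. A ((x#xs)!i) (ans (take i (x#xs)))))
       = exp (-l * A x (ans [])) * exp (-l * (\<Sum>i<k. A (xs!i) (ans (x # take i xs))))" for x xs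
      by (subst sum.lessThan_Suc_shift) (simp add: distrib_left exp_add[symmetric] del: sum.lessThan_Suc)
    have "es q \<mu> (Suc k) (\<lambda>xs. exp (-l * (\<Sum>i<Suc k. A (xs!i) (ans (take i xs)))))
       = (\<Sum>x=1..q. \<mu> x * es q \<mu> k (\<lambda>xs. exp (-l * A x (ans [])) * exp (-l * (\<Sum>i<k. A (xs!i) (ans (x # take i xs))))))"
      by (simp only: es.simps split)
    also have "\<dots> = (\<Sum>x=1..q. \<mu> x * (exp (-l * A x (ans [])) * es q \<mu> k (\<lambda>xs. exp (-l * (\<Sum>i<k. A (xs!i) (ans (x # take i xs)))))))"
      using es_affine[OF mu, of _ 0] by simp
    also have "\<dots> \<le> (\<Sum>x=1..q. \<mu> x * (exp (-l * A x (ans [])) * ?E ^ k))"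
    proof (intro sum_mono mult_left_mono)
      fix x assume x: "x \<in> {1..q}"
      show "0 \<le> \<mu> x" using mu0 x by auto
      show "0 \<le> exp (-l * A x (ans []))" by simp
      have "\<forall>ys. set ys \<subseteq> {1..q} \<longrightarrow> ans (x # ys) \<in> {1..q}" using ans x by auto
      then show "es q \<mu> k (\<lambda>xs. exp (-l * (\<Sum>i<k. A (xs!i) (ans (x # take i xs))))) \<le> ?E ^ k"
        using Suc.IH[rule_format, of "\<lambda>ys. ans (x # ys)"] by simp
    qed
    also have "\<dots> = (\<Sum>x=1..q. \<mu> x * exp (-l * A x (ans []))) * ?E ^ k"
      by (simp add: sum_distrib_right algebra_simps)
    also have "\<dots> \<le> ?E * ?E ^ k"
      by (intro mult_right_mono round_bound[OF mu nn ub _ y0 l]) (use mm y0 in auto)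
    finally show "es q \<mu> (Suc k) (\<lambda>xs. exp (-l * (\<Sum>i<Suc k. A (xs!i) (ans (take i xs))))) \<le> ?E ^ Suc k"
      by simp
  qed
qed



lemma es_integral:
  fixes f :: "'w \<Rightarrow> nat list \<Rightarrow> real"
  shows "(\<forall>xs. length xs = k \<and> set xs \<subseteq> {1..q} \<longrightarrow> integrable M (\<lambda>\<omega>. f \<omega> xs)) \<Longrightarrow>
    integrable M (\<lambda>\<omega>. es q \<mu> k (f \<omega>)) \<and> (\<integral>\<omega>. es q \<mu> k (f \<omega>) \<partial>M) = es q \<mu> k (\<lambda>xs. \<integral>\<omega>. f \<omega> xs \<partial>M)"
proof (induction k arbitrary: f)
  case 0 then show ?case by simp
next
  case (Suc k)
  have IH: "integrable M (\<lambda>\<omega>. es q \<mu> k (\<lambda>xs. f \<omega> (x # xs))) \<and>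
     (\<integral>\<omega>. es q \<mu> k (\<lambda>xs. f \<omega> (x # xs)) \<partial>M) = es q \<mu> k (\<lambda>xs. \<integral>\<omega>. f \<omega> (x # xs) \<partial>M)"
    if x: "x \<in> {1..q}" for x
    using Suc.IH[of "\<lambda>\<omega> xs. f \<omega> (x # xs)"] Suc.prems x by auto
  have "integrable M (\<lambda>\<omega>. \<Sum>x=1..q. \<mu> x * es q \<mu> k (\<lambda>xs. f \<omega> (x # xs)))"
    using IH by (intro Bochner_Integration.integrable_sum[where I="{1..q}" and f="\<lambda>x \<omega>. \<mu> x * es q \<mu> k (\<lambda>xs. f \<omega> (x # xs))"]) auto
  moreover have "(\<integral>\<omega>. (\<Sum>x=1..q. \<mu> x * es q \<mu> k (\<lambda>xs. f \<omega> (x # xs))) \<partial>M)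
     = (\<Sum>x=1..q. \<mu> x * es q \<mu> k (\<lambda>xs. \<integral>\<omega>. f \<omega> (x # xs) \<partial>M))"
    using IH by (subst Bochner_Integration.integral_sum) (auto intro!: sum.cong)
  ultimately show ?case by simp
qed

lemma minimax_choice:
  fixes A :: "nat \<Rightarrow> nat \<Rightarrow> real"
  assumes q: "q \<ge> 1"
    and nn: "\<forall>x\<in>{1..q}. \<forall>y\<in>{1..q}. 0 \<le> A x y"
    and ub: "\<forall>x\<in>{1..q}. \<forall>y\<in>{1..q}. A x y \<le> Am"
    and d: "0 < d"
  shows "\<exists>\<mu>\<in>mixed_strategies q. \<forall>y\<in>{1..q}. game_value q A - d \<le> (\<Sum>x=1..q. \<mu> x * A x y)"
proof -
  define F where "F \<mu> \<nu> = (\<Sum>x=1..q. \<Sum>y=1..q. \<mu> x * \<nu> y * A x y)" for \<mu> \<nu> :: "nat \<Rightarrow> real"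
  define g where "g \<mu> = (INF \<nu>\<in>mixed_strategies q. F \<mu> \<nu>)" for \<mu>
  define e where "e y = (\<lambda>z::nat. if z = y then 1 else (0::real))" for y
  have e_mixed: "e y \<in> mixed_strategies q" if "y \<in> {1..q}" for y
    using that by (simp add: mixed_strategies_def e_def)
  have Fe: "F \<mu> (e y) = (\<Sum>x=1..q. \<mu> x * A x y)" if "y \<in> {1..q}" for \<mu> y
  proof -
    have "(\<Sum>z=1..q. \<mu> x * e y z * A x z) = \<mu> x * A x y" for x
    proof -
      have "(\<Sum>z=1..q. \<mu> x * e y z * A x z) = (\<Sum>z\<in>{1..q}. if z = y then \<mu> x * A x z else 0)"
        by (rule sum.cong) (auto simp: e_def)
      also have "\<dots> = \<mu> x * A x y" using that by (subst sum.delta) auto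
      finally show ?thesis .
    qed
    then show ?thesis by (simp add: F_def)
  qed
  have F0: "0 \<le> F \<mu> \<nu>" if "\<mu> \<in> mixed_strategies q" "\<nu> \<in> mixed_strategies q" for \<mu> \<nu>
    using that nn unfolding F_def mixed_strategies_def by (auto intro!: sum_nonneg)
  have bb: "bdd_below (F \<mu> ` mixed_strategies q)" if "\<mu> \<in> mixed_strategies q" for \<mu>
    using F0[OF that] by (intro bdd_belowI2) auto
  have 1: "(1::nat) \<in> {1..q}" using q by auto
  have ne: "mixed_strategies q \<noteq> {}" using e_mixed[OF 1] by auto
  have "g \<mu> \<le> Am" if mu: "\<mu> \<in> mixed_strategies q" for \<mu>
  proof -
    have "g \<mu> \<le> F \<mu> (e 1)" unfolding g_def by (rule cINF_lower[OF bb[OF mu] e_mixed[OF 1]])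
    also have "\<dots> = (\<Sum>x=1..q. \<mu> x * A x 1)" using Fe[OF 1] .
    also have "\<dots> \<le> (\<Sum>x=1..q. \<mu> x * Am)"
      using mu ub 1 by (intro sum_mono mult_left_mono) (auto simp: mixed_strategies_def)
    also have "\<dots> = Am" using mu by (simp add: sum_distrib_right[symmetric] mixed_strategies_def)
    finally show ?thesis .
  qed
  then have ba: "bdd_above (g ` mixed_strategies q)" by (intro bdd_aboveI2) auto
  have "game_value q A - d < (SUP \<mu>\<in>mixed_strategies q. g \<mu>)"
    using d by (simp add: game_value_def g_def F_def)
  then obtain \<mu> where mu: "\<mu> \<in> mixed_strategies q" and lt: "game_value q A - d < g \<mu>"
    using less_cSUP_iff[OF ne ba] by blast
  have "\<forall>y\<in>{1..q}. game_value q A - d \<le> (\<Sum>x=1..q. \<mu> x * A x y)"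
  proof
    fix y assume y: "y \<in> {1..q}"
    have "g \<mu> \<le> F \<mu> (e y)" unfolding g_def by (rule cINF_lower[OF bb[OF mu] e_mixed[OF y]])
    then show "game_value q A - d \<le> (\<Sum>x=1..q. \<mu> x * A x y)" using lt Fe[OF y, of \<mu>] by linarith
  qed
  then show ?thesis using mu by blast
qed



lemma per_omega:
  fixes A :: "nat \<Rightarrow> nat \<Rightarrow> real" and D :: det_adv_alg
  assumes mu: "\<mu> \<in> mixed_strategies q"
    and nn: "\<forall>x\<in>{1..q}. \<forall>y\<in>{1..q}. 0 \<le> A x y"
    and ub: "\<forall>x\<in>{1..q}. \<forall>y\<in>{1..q}. A x y \<le> Am"
    and mm: "\<forall>y\<in>{1..q}. m \<le> (\<Sum>x=1..q. \<mu> x * A x y)"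
    and l: "0 < l" and wf: "wf_alg q D"
    and br: "\<forall>xs. valid_input q n xs \<longrightarrow> bits_read D n xs \<le> B"
  shows "l * real n * m - real B * ln 2 - real n * (l^2*Am^2/2) \<le> l * es q \<mu> n (\<lambda>xs. alg_cost A D n xs)"
proof -
  define L where "L = {bs. set bs \<subseteq> (UNIV::bool set) \<and> length bs = B}"
  define T where "T = (\<lambda>bs i. i < B \<and> bs ! i) ` L"
  have finL: "finite L" unfolding L_def by (rule finite_lists_length_eq) simp
  have cardL: "card L = 2 ^ B" unfolding L_def using card_lists_length_eq[of "UNIV::bool set" B] by simp
  have finT: "finite T" unfolding T_def using finL by simp
  have cardT: "real (card T) \<le> 2 ^ B"
  proof -
    have "card T \<le> card L" unfolding T_def by (rule card_image_le[OF finL])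
    then show ?thesis using cardL by (metis of_nat_le_iff of_nat_numeral of_nat_power)
  qed
  define C where "C w xs = (\<Sum>i<n. A (xs!i) (answer D n (take i xs) w))" for w xs
  define cost where "cost xs = alg_cost A D n xs" for xs
  have wf1: "\<forall>n xs w. set xs \<subseteq> {1..q} \<longrightarrow> answer D n xs w \<in> {1..q}"
   and wf2: "\<forall>n xs w w'. (\<forall>i < reads D n xs w. w' i = w i) \<longrightarrow>
        answer D n xs w' = answer D n xs w \<and> reads D n xs w' = reads D n xs w"
    using wf unfolding wf_alg_def by blast+
  have trunc: "\<exists>w\<in>T. cost xs = C w xs" if xs: "length xs = n" "set xs \<subseteq> {1..q}" for xs
  proof -
    define w0 where "w0 = advice D n xs"
    define w where "w = (\<lambda>i. i < B \<and> w0 i)"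
    have "w = (\<lambda>i. i < B \<and> map w0 [0..<B] ! i)" unfolding w_def by (auto simp: fun_eq_iff)
    then have wT: "w \<in> T" unfolding T_def L_def by auto
    have "answer D n (take i xs) w0 = answer D n (take i xs) w" if i: "i < n" for i
    proof -
      let ?S = "{reads D n (take i xs) (advice D n xs) | i. i < n}"
      have "?S = (\<lambda>i. reads D n (take i xs) (advice D n xs)) ` {..<n}" by auto
      then have "finite (insert 0 ?S)" by simp
      then have "reads D n (take i xs) w0 \<le> bits_read D n xs"
        unfolding bits_read_def w0_def using i by (intro Max_ge) auto
      also have "\<dots> \<le> B" using br xs by (auto simp: valid_input_def)
      finally have "\<forall>j < reads D n (take i xs) w0. w j = w0 j" unfolding w_def by auto
      then show ?thesis using wf2 by metis
    qed
    then have "cost xs = C w xs" unfolding cost_def C_def alg_cost_def w0_def by simp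
    then show ?thesis using wT by blast
  qed
  define E where "E = exp (-l*m + l^2*Am^2/2)"
  have hC: "es q \<mu> n (\<lambda>xs. exp (-l * C w xs)) \<le> E ^ n" for w
  proof -
    have "\<forall>ys. set ys \<subseteq> {1..q} \<longrightarrow> answer D n ys w \<in> {1..q}" using wf1 by blast
    moreover have "0 \<le> l" using l by simp
    ultimately show ?thesis
      using es_hoeff[OF mu nn ub mm, of l n, rule_format, of "\<lambda>ys. answer D n ys w"] unfolding C_def E_def by blast
  qed
  have "es q \<mu> n (\<lambda>xs. exp (-l * cost xs)) \<le> es q \<mu> n (\<lambda>xs. \<Sum>w\<in>T. exp (-l * C w xs))"
  proof (rule es_mono[OF mu], intro allI impI)
    fix xs assume "length xs = n \<and> set xs \<subseteq> {1..q}"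
    then obtain w where w: "w \<in> T" "cost xs = C w xs" using trunc by blast
    then show "exp (-l * cost xs) \<le> (\<Sum>w\<in>T. exp (-l * C w xs))"
      using finT by (auto intro: member_le_sum)
  qed
  also have "\<dots> = (\<Sum>w\<in>T. es q \<mu> n (\<lambda>xs. exp (-l * C w xs)))" by (rule es_sum[OF finT])
  also have "\<dots> \<le> (\<Sum>w\<in>T. E ^ n)" by (intro sum_mono hC)
  also have "\<dots> = real (card T) * E ^ n" by simp
  also have "\<dots> \<le> 2 ^ B * E ^ n" using cardT by (intro mult_right_mono) (auto simp: E_def)
  finally have up: "es q \<mu> n (\<lambda>xs. exp (-l * cost xs)) \<le> 2 ^ B * E ^ n" .
  define c0 where "c0 = -l * es q \<mu> n cost"
  have "es q \<mu> n (\<lambda>xs. (exp c0 - exp c0 * c0) + (exp c0 * -l) * cost xs) \<le> es q \<mu> n (\<lambda>xs. exp (-l * cost xs))"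
  proof (rule es_mono[OF mu], intro allI impI)
    fix xs
    have "exp c0 * (1 + (-l * cost xs - c0)) \<le> exp c0 * exp (-l * cost xs - c0)"
      by (intro mult_left_mono exp_ge_add_one_self) auto
    also have "\<dots> = exp (-l * cost xs)" by (simp add: exp_diff)
    finally show "(exp c0 - exp c0 * c0) + (exp c0 * -l) * cost xs \<le> exp (-l * cost xs)"
      by (simp add: algebra_simps)
  qed
  moreover have "es q \<mu> n (\<lambda>xs. (exp c0 - exp c0 * c0) + (exp c0 * -l) * cost xs) = exp c0"
    by (subst es_affine[OF mu]) (simp add: c0_def algebra_simps)
  ultimately have "exp c0 \<le> 2 ^ B * E ^ n" using up by linarith
  also have "2 ^ B * E ^ n = exp (real B * ln 2 + real n * (-l*m + l^2*Am^2/2))"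
    by (simp add: exp_add exp_of_nat_mult E_def)
  finally have "c0 \<le> real B * ln 2 + real n * (-l*m + l^2*Am^2/2)" by simp
  then show ?thesis unfolding c0_def cost_def by (simp add: algebra_simps)
qed



theorem theorem3:
  fixes q :: nat and A :: "nat \<Rightarrow> nat \<Rightarrow> real" and \<epsilon> :: real
    and M :: "'w measure" and alg :: "'w \<Rightarrow> det_adv_alg" and b :: "nat \<Rightarrow> nat"
  assumes "q \<ge> 2"
    and "\<forall>x\<in>{1..q}. \<forall>y\<in>{1..q}. A x y \<ge> 0"
    and "0 < \<epsilon>" and "\<epsilon> \<le> game_value q A"
    and "prob_space M"
    and "\<forall>\<omega>\<in>space M. wf_alg q (alg \<omega>)"
    and "\<forall>n xs. valid_input q n xs \<longrightarrow> (\<lambda>\<omega>. alg_cost A (alg \<omega>) n xs) \<in> borel_measurable M"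
    and "\<forall>n xs. valid_input q n xs \<longrightarrow>
           (\<integral>\<omega>. alg_cost A (alg \<omega>) n xs \<partial>M) \<le> (game_value q A - \<epsilon>) * real n"
    and "\<forall>n xs. \<forall>\<omega>\<in>space M. valid_input q n xs \<longrightarrow> bits_read (alg \<omega>) n xs \<le> b n"
  shows "\<forall>n. real (b n) \<ge> \<epsilon>\<^sup>2 / (2 * ln 2 * (max_entry q A)\<^sup>2) * real n"
proof
  fix n
  note q2 = assms(1) and nn = assms(2) and eps = assms(3) and epsV = assms(4)
    and P = assms(5) and wfa = assms(6) and meas = assms(7) and exp_cost = assms(8)
    and bits = assms(9)
  interpret prob_space M by (rule P)
  define Am where "Am = max_entry q A"
  define V where "V = game_value q A"
  define B where "B = b n"
  have q1: "q \<ge> 1" using q2 by simp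
  have Seq: "{A x y | x y. x \<in> {1..q} \<and> y \<in> {1..q}} = (\<lambda>(x,y). A x y) ` ({1..q}\<times>{1..q})"
    by auto blast
  have ub: "\<forall>x\<in>{1..q}. \<forall>y\<in>{1..q}. A x y \<le> Am"
  proof (intro ballI)
    fix x y assume "x \<in> {1..q}" "y \<in> {1..q}"
    then show "A x y \<le> Am" unfolding Am_def max_entry_def Seq
      by (intro Max_ge) auto
  qed
  have Am0: "0 \<le> Am" using ub nn q1 by (meson atLeastAtMost_iff le_refl order_trans)
  define cost where "cost \<omega> xs = alg_cost A (alg \<omega>) n xs" for \<omega> xs
  have intc: "integrable M (\<lambda>\<omega>. cost \<omega> xs)" if xs: "length xs = n \<and> set xs \<subseteq> {1..q}" for xs
  proof (rule integrable_const_bound[where B = "real n * Am"])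
    show "(\<lambda>\<omega>. cost \<omega> xs) \<in> borel_measurable M"
      using meas xs unfolding cost_def valid_input_def by blast
    show "AE \<omega> in M. norm (cost \<omega> xs) \<le> real n * Am"
    proof (rule AE_I2)
      fix \<omega> assume \<omega>: "\<omega> \<in> space M"
      have wf1: "\<forall>n xs w. set xs \<subseteq> {1..q} \<longrightarrow> answer (alg \<omega>) n xs w \<in> {1..q}"
        using wfa \<omega> unfolding wf_alg_def by blast
      have bnd: "0 \<le> A (xs!i) (answer (alg \<omega>) n (take i xs) w) \<and> A (xs!i) (answer (alg \<omega>) n (take i xs) w) \<le> Am"
        if i: "i < n" for i w
      proof -
        have "xs ! i \<in> {1..q}" using xs i nth_mem by blast
        moreover have "set (take i xs) \<subseteq> {1..q}" using xs by (meson order_trans set_take_subset)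
        then have "answer (alg \<omega>) n (take i xs) w \<in> {1..q}" using wf1 by blast
        ultimately show ?thesis using nn ub by blast
      qed
      have "0 \<le> cost \<omega> xs" unfolding cost_def alg_cost_def using bnd by (intro sum_nonneg) auto
      moreover have "cost \<omega> xs \<le> (\<Sum>i<n. Am)" unfolding cost_def alg_cost_def using bnd by (intro sum_mono) auto
      ultimately show "norm (cost \<omega> xs) \<le> real n * Am" by simp
    qed
  qed
  have key: "l * real n * (\<epsilon> - d) \<le> real B * ln 2 + real n * (l^2*Am^2/2)"
    if d: "0 < d" and l: "0 < l" for d l
  proof -
    obtain \<mu> where mu: "\<mu> \<in> mixed_strategies q"
      and mm: "\<forall>y\<in>{1..q}. V - d \<le> (\<Sum>x=1..q. \<mu> x * A x y)"
      using minimax_choice[OF q1 nn ub d] unfolding V_def by blast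
    have EI: "integrable M (\<lambda>\<omega>. es q \<mu> n (cost \<omega>)) \<and>
        (\<integral>\<omega>. es q \<mu> n (cost \<omega>) \<partial>M) = es q \<mu> n (\<lambda>xs. \<integral>\<omega>. cost \<omega> xs \<partial>M)"
      by (rule es_integral) (use intc in blast)
    have "l * real n * (V - d) - real B * ln 2 - real n * (l^2*Am^2/2) \<le> (\<integral>\<omega>. l * es q \<mu> n (cost \<omega>) \<partial>M)"
    proof (rule integral_ge_const)
      show "integrable M (\<lambda>\<omega>. l * es q \<mu> n (cost \<omega>))" using EI by simp
      show "AE \<omega> in M. l * real n * (V - d) - real B * ln 2 - real n * (l^2*Am^2/2) \<le> l * es q \<mu> n (cost \<omega>)"
      proof (rule AE_I2)
        fix \<omega> assume \<omega>: "\<omega> \<in> space M"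
        show "l * real n * (V - d) - real B * ln 2 - real n * (l^2*Am^2/2) \<le> l * es q \<mu> n (cost \<omega>)"
          unfolding cost_def
          by (rule per_omega[OF mu nn ub mm l]) (use wfa bits \<omega> B_def in auto)
      qed
    qed
    also have "\<dots> = l * es q \<mu> n (\<lambda>xs. \<integral>\<omega>. cost \<omega> xs \<partial>M)" using EI by simp
    also have "\<dots> \<le> l * es q \<mu> n (\<lambda>xs. 0 + 0 * cost undefined xs + (V - \<epsilon>) * real n)"
      using exp_cost l unfolding cost_def V_def valid_input_def
      by (intro mult_left_mono es_mono[OF mu]) auto
    also have "\<dots> = l * ((V - \<epsilon>) * real n)"
      using es_affine[OF mu, of n "(V - \<epsilon>) * real n" 0 "\<lambda>_. 0"] by simp
    finally show ?thesis by (simp add: algebra_simps)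
  qed
  have key2: "l * real n * \<epsilon> \<le> real B * ln 2 + real n * (l^2*Am^2/2)" if l: "0 < l" for l
  proof (rule field_le_epsilon)
    fix e :: real assume e: "0 < e"
    define d where "d = e / (l * real n + 1)"
    have dpos: "0 < d" unfolding d_def using e l by (simp add: add_nonneg_pos)
    have "l * real n * d \<le> e"
    proof -
      have "l * real n * d = e * (l * real n / (l * real n + 1))" unfolding d_def by simp
      also have "\<dots> \<le> e * 1" using e l by (intro mult_left_mono) (auto simp: divide_le_eq_1 add_nonneg_pos)
      finally show ?thesis by simp
    qed
    then show "l * real n * \<epsilon> \<le> real B * ln 2 + real n * (l^2*Am^2/2) + e"
      using key[OF dpos l] by (simp add: algebra_simps)
  qed
  show "\<epsilon>\<^sup>2 / (2 * ln 2 * (max_entry q A)\<^sup>2) * real n \<le> real (b n)"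
  proof (cases "Am = 0")
    case True then show ?thesis by (simp add: Am_def[symmetric])
  next
    case False
    then have Apos: "0 < Am^2" by simp
    define l where "l = \<epsilon> / Am^2"
    have lpos: "0 < l" unfolding l_def using eps Apos by simp
    have h: "l * real n * \<epsilon> \<le> real B * ln 2 + real n * (l^2*Am^2/2)" by (rule key2[OF lpos])
    have e1: "l * real n * \<epsilon> = real n * \<epsilon>^2 / Am^2" unfolding l_def by (simp add: power2_eq_square)
    have e2: "real n * (l^2*Am^2/2) = real n * \<epsilon>^2 / (2 * Am^2)" unfolding l_def using Apos
      by (simp add: power2_eq_square field_simps)
    have h2: "real n * \<epsilon>^2 / Am^2 \<le> real B * ln 2 + real n * \<epsilon>^2 / (2 * Am^2)"
      using h unfolding e1 e2 .
    have "real n * \<epsilon>^2 / (2 * Am^2) = (real n * \<epsilon>^2 / Am^2) / 2" by simp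
    then have "real n * \<epsilon>^2 / (2 * Am^2) \<le> real B * ln 2" using h2
      by (metis add_diff_cancel_right' diff_le_eq field_sum_of_halves)
    then have "\<epsilon>^2 / (2 * ln 2 * Am^2) * real n \<le> real B" using Apos
      by (simp add: field_simps)
    then show ?thesis by (simp add: Am_def B_def)
  qed
qed

end
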